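(* The assignment $\Gamma$ is a functor from the category $\mathfrak{B}$ of Bochvar algebras (with homomorphisms) to the category $\mathfrak{S}$ of Bochvar systems. It sends a Bochvar algebra $\mathbf{A}$ to $\mathbb{B}_{\mathbf{A}}$, and a homomorphism $f:\mathbf{A}_1\to\mathbf{A}_2$ to its restriction to the bottom fibre of $\mathbf{A}_1$. In particular, this restriction maps the bottom fibre of $\mathbf{A}_1$ into the bottom fibre of $\mathbf{A}_2$ and is a morphism of Bochvar systems $\mathbb{B}_{\mathbf{A}_1}\to\mathbb{B}_{\mathbf{A}_2}$.
   Context: $\mathbf{WK}^e$ is the three-element algebra on $\{0,\tfrac12,1\}$ of type $\langle\wedge,\vee,\neg,J_2,0,1\rangle$. Its operations are: - $\neg$ swaps $0,1$ and fixes $\tfrac12$; - $\wedge,\vee$ are Boolean on $\{0,1\}$ and return $\tfrac12$ if some argument is $\tfrac12$; - $J_2(1)=1$ and $J_2(\tfrac12)=J_2(0)=0$. Bochvar algebras are the members of $ISP(\mathbf{WK}^e)$. The $\{\wedge,\vee,\neg,0,1\}$-reduct of a Bochvar algebra is canonically a Płonka sum of Boolean algebras $\mathbf{A}_i$ over a join-semilattice $\langle I,\vee,i_0\rangle$; the bottom fibre is $\mathbf{A}_{i_0}$. A Bochvar system is a pair $\langle\mathbf{B},\mathbf{I}\rangle$ with $\mathbf{B}$ a Boolean algebra and $I\subseteq B$ containing $1$ and closed under $\wedge$. A morphism $\langle\mathbf{B}_1,\mathbf{I}_1\rangle\to\langle\mathbf{B}_2,\mathbf{I}_2\rangle$ is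 a Boolean homomorphism $g$ with $g(I_1)\subseteq I_2$. $\mathbb{B}_{\mathbf{A}}=\langle\mathbf{A}_{i_0},K\rangle$ with $K=\{J_2(1^{A_i}):i\in I\}$, where $1^{A_i}$ is the top of fibre $\mathbf{A}_i$. *)

theory Defs
  imports "HOL-Library.FuncSet"
begin

datatype wk = W0 | Wh | W1   (* W0 = 0, Wh = 1/2, W1 = 1 *)

fun wk_neg :: "wk \<Rightarrow> wk" where
  "wk_neg W0 = W1" | "wk_neg Wh = Wh" | "wk_neg W1 = W0"

definition wk_meet :: "wk \<Rightarrow> wk \<Rightarrow> wk" where
  "wk_meet x y = (if x = Wh \<or> y = Wh then Wh else if x = W1 \<and> y = W1 then W1 else W0)"

definition wk_join :: "wk \<Rightarrow> wk \<Rightarrow> wk" where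
  "wk_join x y = (if x = Wh \<or> y = Wh then Wh else if x = W1 \<or> y = W1 then W1 else W0)"

definition wk_J2 :: "wk \<Rightarrow> wk" where
  "wk_J2 x = (if x = W1 then W1 else W0)"

record 'a balg =
  car :: "'a set"
  meet :: "'a \<Rightarrow> 'a \<Rightarrow> 'a"
  join :: "'a \<Rightarrow> 'a \<Rightarrow> 'a"
  neg :: "'a \<Rightarrow> 'a"
  jtwo :: "'a \<Rightarrow> 'a"
  zero :: "'a"
  one :: "'a"

definition is_algebra :: "'a balg \<Rightarrow> bool" where
  "is_algebra A \<longleftrightarrow>
     zero A \<in> car A \<and> one A \<in> car A \<and>
     (\<forall>x\<in>car A. \<forall>y\<in>car A. meet A x y \<in> car A \<and> join A x y \<in> car A) \<and>
     (\<forall>x\<in>car A. neg A x \<in> car A \<and> jtwo A x \<in> car A)"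

definition is_hom :: "'a balg \<Rightarrow> 'b balg \<Rightarrow> ('a \<Rightarrow> 'b) \<Rightarrow> bool" where
  "is_hom A B h \<longleftrightarrow>
     h \<in> car A \<rightarrow> car B \<and>
     (\<forall>x\<in>car A. \<forall>y\<in>car A. h (meet A x y) = meet B (h x) (h y)
                           \<and> h (join A x y) = join B (h x) (h y)) \<and>
     (\<forall>x\<in>car A. h (neg A x) = neg B (h x) \<and> h (jtwo A x) = jtwo B (h x)) \<and>
     h (zero A) = zero B \<and> h (one A) = one B"

definition wk_power :: "'i set \<Rightarrow> ('i \<Rightarrow> wk) balg" where
  "wk_power X = \<lparr> car = {f. \<forall>i. i \<notin> X \<longrightarrow> f i = W0},
     meet = (\<lambda>f g i. if i \<in> X then wk_meet (f i) (g i) else W0),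
     join = (\<lambda>f g i. if i \<in> X then wk_join (f i) (g i) else W0),
     neg = (\<lambda>f i. if i \<in> X then wk_neg (f i) else W0),
     jtwo = (\<lambda>f i. if i \<in> X then wk_J2 (f i) else W0),
     zero = (\<lambda>i. W0),
     one = (\<lambda>i. if i \<in> X then W1 else W0) \<rparr>"

text \<open>Bochvar algebras: members of ISP(WK^e), i.e. algebras embeddable
  (injective homomorphism) into a direct power of WK^e.  The index set is
  taken of type \<open>('a \<Rightarrow> wk) set\<close>; this loses no generality, since any embedding
  into a power yields one into the power indexed by the homomorphisms A \<rightarrow> WK^e.\<close>

definition bochvar_algebra :: "'a balg \<Rightarrow> bool" where
  "bochvar_algebra A \<longleftrightarrow> is_algebra A \<and>
     (\<exists>(X :: ('a \<Rightarrow> wk) set) h. is_hom A (wk_power X) h \<and> inj_on h (car A))"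

text \<open>In the canonical Plonka decomposition of the reduct, the index of b is
  below the index of a iff a \<or> (b \<and> \<not>b) = a.  Two elements lie in the same
  fibre iff their indices coincide.\<close>

definition fibre_le :: "'a balg \<Rightarrow> 'a \<Rightarrow> 'a \<Rightarrow> bool" where
  "fibre_le A b a \<longleftrightarrow> join A a (meet A b (neg A b)) = a"

definition fibre :: "'a balg \<Rightarrow> 'a \<Rightarrow> 'a set" where
  "fibre A a = {b \<in> car A. fibre_le A a b \<and> fibre_le A b a}"

definition bottom_fibre :: "'a balg \<Rightarrow> 'a set" where
  "bottom_fibre A = fibre A (zero A)"

definition fibre_top :: "'a balg \<Rightarrow> 'a \<Rightarrow> 'a" where
  "fibre_top A a = join A a (neg A a)"

record 'a boolalg =
  bcar :: "'a set"
  bmeet :: "'a \<Rightarrow> 'a \<Rightarrow> 'a"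
  bjoin :: "'a \<Rightarrow> 'a \<Rightarrow> 'a"
  bneg :: "'a \<Rightarrow> 'a"
  bzero :: "'a"
  bone :: "'a"

definition boolean_algebra_on :: "'a boolalg \<Rightarrow> bool" where
  "boolean_algebra_on B \<longleftrightarrow>
     bzero B \<in> bcar B \<and> bone B \<in> bcar B \<and>
     (\<forall>x\<in>bcar B. bneg B x \<in> bcar B) \<and>
     (\<forall>x\<in>bcar B. \<forall>y\<in>bcar B. bmeet B x y \<in> bcar B \<and> bjoin B x y \<in> bcar B) \<and>
     (\<forall>x\<in>bcar B. \<forall>y\<in>bcar B. bmeet B x y = bmeet B y x \<and> bjoin B x y = bjoin B y x) \<and>
     (\<forall>x\<in>bcar B. \<forall>y\<in>bcar B. \<forall>z\<in>bcar B.
         bmeet B x (bmeet B y z) = bmeet B (bmeet B x y) z \<and>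
         bjoin B x (bjoin B y z) = bjoin B (bjoin B x y) z \<and>
         bmeet B x (bjoin B y z) = bjoin B (bmeet B x y) (bmeet B x z) \<and>
         bjoin B x (bmeet B y z) = bmeet B (bjoin B x y) (bjoin B x z)) \<and>
     (\<forall>x\<in>bcar B. \<forall>y\<in>bcar B. bmeet B x (bjoin B x y) = x \<and> bjoin B x (bmeet B x y) = x) \<and>
     (\<forall>x\<in>bcar B. bmeet B x (bneg B x) = bzero B \<and> bjoin B x (bneg B x) = bone B)"

definition boolean_hom :: "'a boolalg \<Rightarrow> 'b boolalg \<Rightarrow> ('a \<Rightarrow> 'b) \<Rightarrow> bool" where
  "boolean_hom B1 B2 g \<longleftrightarrow>
     g \<in> bcar B1 \<rightarrow> bcar B2 \<and>
     (\<forall>x\<in>bcar B1. \<forall>y\<in>bcar B1. g (bmeet B1 x y) = bmeet B2 (g x) (g y)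
                              \<and> g (bjoin B1 x y) = bjoin B2 (g x) (g y)) \<and>
     (\<forall>x\<in>bcar B1. g (bneg B1 x) = bneg B2 (g x)) \<and>
     g (bzero B1) = bzero B2 \<and> g (bone B1) = bone B2"

definition bochvar_system :: "'a boolalg \<Rightarrow> 'a set \<Rightarrow> bool" where
  "bochvar_system B I \<longleftrightarrow> boolean_algebra_on B \<and> I \<subseteq> bcar B \<and> bone B \<in> I \<and>
     (\<forall>x\<in>I. \<forall>y\<in>I. bmeet B x y \<in> I)"

definition bochvar_system_hom ::
  "'a boolalg \<Rightarrow> 'a set \<Rightarrow> 'b boolalg \<Rightarrow> 'b set \<Rightarrow> ('a \<Rightarrow> 'b) \<Rightarrow> bool" where
  "bochvar_system_hom B1 I1 B2 I2 g \<longleftrightarrow> boolean_hom B1 B2 g \<and> g ` I1 \<subseteq> I2"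

definition Gamma_alg :: "'a balg \<Rightarrow> 'a boolalg" where
  "Gamma_alg A = \<lparr> bcar = bottom_fibre A, bmeet = meet A, bjoin = join A,
                   bneg = neg A, bzero = zero A, bone = one A \<rparr>"

definition Gamma_K :: "'a balg \<Rightarrow> 'a set" where
  "Gamma_K A = {jtwo A (fibre_top A a) | a. a \<in> car A}"

definition Gamma_mor :: "'a balg \<Rightarrow> ('a \<Rightarrow> 'b) \<Rightarrow> ('a \<Rightarrow> 'b)" where
  "Gamma_mor A f = restrict f (bottom_fibre A)"

end

theory Submission
  imports Defs
begin

lemma neg_nh: "y \<noteq> Wh \<Longrightarrow> wk_neg y \<noteq> Wh" by (cases y) auto

lemma wk_laws:
  "a \<noteq> Wh \<Longrightarrow> b \<noteq> Wh \<Longrightarrow> wk_meet a b = wk_meet b a"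
  "a \<noteq> Wh \<Longrightarrow> b \<noteq> Wh \<Longrightarrow> wk_join a b = wk_join b a"
  "a \<noteq> Wh \<Longrightarrow> b \<noteq> Wh \<Longrightarrow> c \<noteq> Wh \<Longrightarrow> wk_meet a (wk_meet b c) = wk_meet (wk_meet a b) c"
  "a \<noteq> Wh \<Longrightarrow> b \<noteq> Wh \<Longrightarrow> c \<noteq> Wh \<Longrightarrow> wk_join a (wk_join b c) = wk_join (wk_join a b) c"
  "a \<noteq> Wh \<Longrightarrow> b \<noteq> Wh \<Longrightarrow> c \<noteq> Wh \<Longrightarrow> wk_meet a (wk_join b c) = wk_join (wk_meet a b) (wk_meet a c)"
  "a \<noteq> Wh \<Longrightarrow> b \<noteq> Wh \<Longrightarrow> c \<noteq> Wh \<Longrightarrow> wk_join a (wk_meet b c) = wk_meet (wk_join a b) (wk_join a c)"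
  "a \<noteq> Wh \<Longrightarrow> b \<noteq> Wh \<Longrightarrow> wk_meet a (wk_join a b) = a"
  "a \<noteq> Wh \<Longrightarrow> b \<noteq> Wh \<Longrightarrow> wk_join a (wk_meet a b) = a"
  "a \<noteq> Wh \<Longrightarrow> wk_meet a (wk_neg a) = W0"
  "a \<noteq> Wh \<Longrightarrow> wk_join a (wk_neg a) = W1"
  by (cases a; cases b; cases c; simp add: wk_meet_def wk_join_def)+

lemma wk_cases3: "x = W0 \<or> x = Wh \<or> x = W1"
  by (cases x) auto

locale emb =
  fixes A :: "'a balg" and X :: "'i set" and h :: "'a \<Rightarrow> 'i \<Rightarrow> wk"
  assumes alg: "is_algebra A" and hom: "is_hom A (wk_power X) h" and inj: "inj_on h (car A)"
begin

lemma cl: "zero A \<in> car A" "one A \<in> car A"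
  "x \<in> car A \<Longrightarrow> y \<in> car A \<Longrightarrow> meet A x y \<in> car A"
  "x \<in> car A \<Longrightarrow> y \<in> car A \<Longrightarrow> join A x y \<in> car A"
  "x \<in> car A \<Longrightarrow> neg A x \<in> car A"
  "x \<in> car A \<Longrightarrow> jtwo A x \<in> car A"
  using alg unfolding is_algebra_def by auto

lemma hs: "x \<in> car A \<Longrightarrow> y \<in> car A \<Longrightarrow> h (meet A x y) = (\<lambda>i. if i \<in> X then wk_meet (h x i) (h y i) else W0)"
  "x \<in> car A \<Longrightarrow> y \<in> car A \<Longrightarrow> h (join A x y) = (\<lambda>i. if i \<in> X then wk_join (h x i) (h y i) else W0)"
  "x \<in> car A \<Longrightarrow> h (neg A x) = (\<lambda>i. if i \<in> X then wk_neg (h x i) else W0)"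
  "x \<in> car A \<Longrightarrow> h (jtwo A x) = (\<lambda>i. if i \<in> X then wk_J2 (h x i) else W0)"
  "h (zero A) = (\<lambda>i. W0)" "h (one A) = (\<lambda>i. if i \<in> X then W1 else W0)"
  using hom unfolding is_hom_def wk_power_def by auto

lemma out: "x \<in> car A \<Longrightarrow> i \<notin> X \<Longrightarrow> h x i = W0"
  using hom unfolding is_hom_def wk_power_def by (auto simp: Pi_def)

lemma eqI: "x \<in> car A \<Longrightarrow> y \<in> car A \<Longrightarrow> (\<And>i. i \<in> X \<Longrightarrow> h x i = h y i) \<Longrightarrow> x = y"
  using inj out unfolding inj_on_def by (metis ext)

lemma bf: "b \<in> bottom_fibre A \<longleftrightarrow> b \<in> car A \<and> (\<forall>i\<in>X. h b i \<noteq> Wh)"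
proof
  assume b: "b \<in> bottom_fibre A"
  hence bc: "b \<in> car A" and e: "join A (zero A) (meet A b (neg A b)) = zero A"
    unfolding bottom_fibre_def fibre_def fibre_le_def by auto
  have "h (join A (zero A) (meet A b (neg A b))) = h (zero A)" using e by simp
  hence "\<forall>i\<in>X. h b i \<noteq> Wh" using bc
    by (auto simp: hs cl fun_eq_iff wk_join_def wk_meet_def split: if_splits)
  thus "b \<in> car A \<and> (\<forall>i\<in>X. h b i \<noteq> Wh)" using bc by auto
next
  assume a: "b \<in> car A \<and> (\<forall>i\<in>X. h b i \<noteq> Wh)"
  have 1: "join A b (meet A (zero A) (neg A (zero A))) = b"
  proof (rule eqI)
    fix i assume i: "i \<in> X"
    show "h (join A b (meet A (zero A) (neg A (zero A)))) i = h b i"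
      using a i wk_cases3[of "h b i"] by (auto simp: hs cl wk_join_def wk_meet_def)
  qed (use a in \<open>auto simp: cl\<close>)
  have 2: "join A (zero A) (meet A b (neg A b)) = zero A"
  proof (rule eqI)
    fix i assume i: "i \<in> X"
    show "h (join A (zero A) (meet A b (neg A b))) i = h (zero A) i"
      using a i wk_cases3[of "h b i"] by (auto simp: hs cl wk_join_def wk_meet_def)
  qed (use a in \<open>auto simp: cl\<close>)
  show "b \<in> bottom_fibre A" using a 1 2 unfolding bottom_fibre_def fibre_def fibre_le_def by auto
qed

lemma bool_alg: "boolean_algebra_on (Gamma_alg A)"
proof -
  have B: "\<And>b i. b \<in> bottom_fibre A \<Longrightarrow> i \<in> X \<Longrightarrow> h b i = W0 \<or> h b i = W1"
    using bf wk_cases3 by blast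
  have D: "\<And>b i. b \<in> bottom_fibre A \<Longrightarrow> i \<in> X \<Longrightarrow> h b i \<noteq> Wh"
    using bf by blast
  have C: "\<And>b. b \<in> bottom_fibre A \<Longrightarrow> b \<in> car A" using bf by blast
  have clo: "\<And>x y. x \<in> bottom_fibre A \<Longrightarrow> y \<in> bottom_fibre A \<Longrightarrow> meet A x y \<in> bottom_fibre A \<and> join A x y \<in> bottom_fibre A"
    apply (simp add: bf cl hs)
    by (auto simp: bf cl hs wk_meet_def wk_join_def)
  have cln: "\<And>x. x \<in> bottom_fibre A \<Longrightarrow> neg A x \<in> bottom_fibre A"
    apply (simp add: bf cl hs)
    by (simp add: neg_nh)
  have z: "zero A \<in> bottom_fibre A" "one A \<in> bottom_fibre A" by (auto simp: bf cl hs)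
  show ?thesis unfolding boolean_algebra_on_def Gamma_alg_def
    apply (simp add: z clo cln)
    apply (intro conjI ballI)
    apply (rule eqI; (simp add: C clo cln cl)?; (simp add: hs C cl clo cln D wk_laws(7-10); fail)?; simp add: hs C cl clo cln D wk_laws)+
    done
qed

lemma J2nh: "wk_J2 y \<noteq> Wh" by (simp add: wk_J2_def)

lemma system: "bochvar_system (Gamma_alg A) (Gamma_K A)"
proof -
  have KB: "Gamma_K A \<subseteq> bottom_fibre A"
  proof
    fix x assume "x \<in> Gamma_K A"
    then obtain a where a: "a \<in> car A" "x = jtwo A (join A a (neg A a))"
      unfolding Gamma_K_def fibre_top_def by blast
    have c: "join A a (neg A a) \<in> car A" using a(1) cl(4,5) by simp
    have xc: "x \<in> car A" using a(2) c cl(6) by simp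
    have "h x i \<noteq> Wh" for i
      using a(2) hs(4)[OF c] J2nh by (simp add: fun_eq_iff)
    thus "x \<in> bottom_fibre A" unfolding bf using xc by blast
  qed
  have one: "one A \<in> Gamma_K A"
  proof -
    have "jtwo A (fibre_top A (one A)) = one A"
      by (rule eqI) (simp_all add: fibre_top_def cl hs wk_J2_def wk_join_def)
    thus ?thesis unfolding Gamma_K_def using cl(2) by (metis (mono_tags, lifting) mem_Collect_eq)
  qed
  have mc: "meet A x y \<in> Gamma_K A" if xy: "x \<in> Gamma_K A" "y \<in> Gamma_K A" for x y
  proof -
    obtain a b where a: "a \<in> car A" "x = jtwo A (fibre_top A a)"
      and b: "b \<in> car A" "y = jtwo A (fibre_top A b)"
      using xy unfolding Gamma_K_def by blast
    have "meet A x y = jtwo A (fibre_top A (meet A a b))"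
    proof (rule eqI)
      fix i assume i: "i \<in> X"
      show "h (meet A x y) i = h (jtwo A (fibre_top A (meet A a b))) i"
        using a b i by (cases "h a i"; cases "h b i"; simp add: fibre_top_def cl hs wk_J2_def wk_join_def wk_meet_def)
    qed (use a b in \<open>auto simp: fibre_top_def cl\<close>)
    moreover have "meet A a b \<in> car A" using a(1) b(1) by (rule cl(3))
    ultimately show ?thesis unfolding Gamma_K_def by (metis (mono_tags, lifting) mem_Collect_eq)
  qed
  have g: "bcar (Gamma_alg A) = bottom_fibre A" "bone (Gamma_alg A) = one A"
    "bmeet (Gamma_alg A) = meet A" by (simp_all add: Gamma_alg_def)
  show ?thesis unfolding bochvar_system_def g using bool_alg KB one mc
    by blast
qed

end

lemma emb_ex: "bochvar_algebra (A :: 'a balg) \<Longrightarrow> \<exists>(X :: ('a \<Rightarrow> wk) set) h. emb A X h"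
proof -
  assume "bochvar_algebra A"
  then obtain X :: "('a \<Rightarrow> wk) set" and h where "is_algebra A" "is_hom A (wk_power X) h" "inj_on h (car A)"
    unfolding bochvar_algebra_def by blast
  hence "emb A X h" unfolding emb_def by blast
  thus ?thesis by blast
qed

lemma bf_pres:
  assumes f: "is_hom A1 A2 f" and al: "is_algebra A1" and b: "b \<in> bottom_fibre A1"
  shows "f b \<in> bottom_fibre A2"
proof -
  have bc: "b \<in> car A1" and e1: "join A1 b (meet A1 (zero A1) (neg A1 (zero A1))) = b"
    and e2: "join A1 (zero A1) (meet A1 b (neg A1 b)) = zero A1"
    using b unfolding bottom_fibre_def fibre_def fibre_le_def by auto
  have z: "zero A1 \<in> car A1" "neg A1 (zero A1) \<in> car A1" "neg A1 b \<in> car A1"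
    "meet A1 (zero A1) (neg A1 (zero A1)) \<in> car A1" "meet A1 b (neg A1 b) \<in> car A1"
    using al bc unfolding is_algebra_def by auto
  have fb: "f b \<in> car A2" using f bc unfolding is_hom_def by auto
  have "f (join A1 b (meet A1 (zero A1) (neg A1 (zero A1)))) = f b" using e1 by simp
  hence 1: "join A2 (f b) (meet A2 (zero A2) (neg A2 (zero A2))) = f b"
    using f z bc unfolding is_hom_def by simp
  have "f (join A1 (zero A1) (meet A1 b (neg A1 b))) = f (zero A1)" using e2 by simp
  hence 2: "join A2 (zero A2) (meet A2 (f b) (neg A2 (f b))) = zero A2"
    using f z bc unfolding is_hom_def by simp
  show ?thesis using fb 1 2 unfolding bottom_fibre_def fibre_def fibre_le_def by auto
qed

theorem lemma3p7:
  fixes A1 :: "'a balg" and A2 :: "'b balg" and A3 :: "'c balg"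
    and f :: "'a \<Rightarrow> 'b" and g :: "'b \<Rightarrow> 'c"
  assumes "bochvar_algebra A1" and "bochvar_algebra A2" and "bochvar_algebra A3"
    and "is_hom A1 A2 f" and "is_hom A2 A3 g"
  shows "bochvar_system (Gamma_alg A1) (Gamma_K A1)
    \<and> f ` bottom_fibre A1 \<subseteq> bottom_fibre A2
    \<and> bochvar_system_hom (Gamma_alg A1) (Gamma_K A1) (Gamma_alg A2) (Gamma_K A2) (Gamma_mor A1 f)
    \<and> Gamma_mor A1 (\<lambda>x. x) = restrict (\<lambda>x. x) (bcar (Gamma_alg A1))
    \<and> Gamma_mor A1 (g \<circ> f) = compose (bottom_fibre A1) (Gamma_mor A2 g) (Gamma_mor A1 f)"
proof -
  obtain X :: "('a \<Rightarrow> wk) set" and h where e: "emb A1 X h" using emb_ex[OF assms(1)] by blast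
  have al: "is_algebra A1" using assms(1) unfolding bochvar_algebra_def by blast
  have S: "bochvar_system (Gamma_alg A1) (Gamma_K A1)" using emb.system[OF e] .
  have P: "\<And>b. b \<in> bottom_fibre A1 \<Longrightarrow> f b \<in> bottom_fibre A2"
    using bf_pres[OF assms(4) al] .
  have BA: "boolean_algebra_on (Gamma_alg A1)" and KB: "Gamma_K A1 \<subseteq> bottom_fibre A1"
    using S unfolding bochvar_system_def by (auto simp: Gamma_alg_def)
  have cl: "\<And>x y. x \<in> bottom_fibre A1 \<Longrightarrow> y \<in> bottom_fibre A1 \<Longrightarrow>
      meet A1 x y \<in> bottom_fibre A1 \<and> join A1 x y \<in> bottom_fibre A1"
    "\<And>x. x \<in> bottom_fibre A1 \<Longrightarrow> neg A1 x \<in> bottom_fibre A1"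
    "zero A1 \<in> bottom_fibre A1" "one A1 \<in> bottom_fibre A1"
    using BA unfolding boolean_algebra_on_def Gamma_alg_def by auto
  have BC: "\<And>x. x \<in> bottom_fibre A1 \<Longrightarrow> x \<in> car A1"
    unfolding bottom_fibre_def fibre_def by auto
  have fh: "is_hom A1 A2 f" by (rule assms(4))
  have BH: "boolean_hom (Gamma_alg A1) (Gamma_alg A2) (Gamma_mor A1 f)"
  proof -
    have hm: "\<And>x y. x \<in> car A1 \<Longrightarrow> y \<in> car A1 \<Longrightarrow> f (meet A1 x y) = meet A2 (f x) (f y) \<and> f (join A1 x y) = join A2 (f x) (f y)"
      "\<And>x. x \<in> car A1 \<Longrightarrow> f (neg A1 x) = neg A2 (f x)"
      "f (zero A1) = zero A2" "f (one A1) = one A2"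
      using fh unfolding is_hom_def by auto
    show ?thesis unfolding boolean_hom_def Gamma_alg_def Gamma_mor_def
      using P cl BC hm by (simp add: Pi_def)
  qed
  have KI: "Gamma_mor A1 f ` Gamma_K A1 \<subseteq> Gamma_K A2"
  proof
    fix y assume "y \<in> Gamma_mor A1 f ` Gamma_K A1"
    then obtain x where x: "x \<in> Gamma_K A1" "y = Gamma_mor A1 f x" by blast
    then obtain a where a: "a \<in> car A1" "x = jtwo A1 (fibre_top A1 a)"
      unfolding Gamma_K_def by blast
    have xb: "x \<in> bottom_fibre A1" using x KB by blast
    have c: "neg A1 a \<in> car A1" "join A1 a (neg A1 a) \<in> car A1"
      using al a unfolding is_algebra_def by auto
    have "y = jtwo A2 (fibre_top A2 (f a))"
      using x xb a c fh by (simp add: Gamma_mor_def fibre_top_def is_hom_def)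
    moreover have "f a \<in> car A2" using fh a unfolding is_hom_def by auto
    ultimately show "y \<in> Gamma_K A2" unfolding Gamma_K_def by blast
  qed
  have C: "Gamma_mor A1 (g \<circ> f) = compose (bottom_fibre A1) (Gamma_mor A2 g) (Gamma_mor A1 f)"
    using P by (auto simp: Gamma_mor_def compose_def fun_eq_iff)
  show ?thesis using S P BH KI C
    by (auto simp: bochvar_system_hom_def Gamma_mor_def Gamma_alg_def)
qed

end
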